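(* Let $(V_1,\dots,V_n)$ be an $n$-tuple of doubly non-commuting isometries on $H$ and let $k\ge0$. Then for all $i\ne j$: (1) $V_i$ commutes with $V_j^kV_j^{*k}$; (2) $V_i^*$ commutes with $V_j^kV_j^{*k}$; (3) $V_i$ and $V_i^*$ commute with $V_j^k(\mathbf 1-V_jV_j^* )V_j^{*k}$.
   Context: Fix $n\ge1$ and $z_{ij}\in\mathbb T$ ($i\ne j$) with $z_{ji}=\overline{z_{ij}}$; $(V_1,\dots,V_n)$ is doubly non-commuting if the $V_i$ are isometries on $H$ with $V_i^*V_j=\overline{z_{ij}}V_jV_i^*$ for $i\ne j$. $\mathbf 1$ is the identity operator. *)

theory Defs
  imports "HOL-Analysis.Analysis"
begin

text \<open>Convention: the complex inner product is linear in the first argument.\<close>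

class complex_inner = real_inner +
  fixes scaleC :: "complex \<Rightarrow> 'a \<Rightarrow> 'a" (infixr \<open>*\<^sub>C\<close> 75)
    and cinner :: "'a \<Rightarrow> 'a \<Rightarrow> complex"
  assumes scaleC_add_right: "a *\<^sub>C (x + y) = a *\<^sub>C x + a *\<^sub>C y"
    and scaleC_add_left: "(a + b) *\<^sub>C x = a *\<^sub>C x + b *\<^sub>C x"
    and scaleC_scaleC: "a *\<^sub>C (b *\<^sub>C x) = (a * b) *\<^sub>C x"
    and scaleC_one: "1 *\<^sub>C x = x"
    and scaleR_scaleC: "scaleR r x = complex_of_real r *\<^sub>C x"
    and cinner_add_left: "cinner (x + y) z = cinner x z + cinner y z"
    and cinner_scaleC_left: "cinner (a *\<^sub>C x) y = a * cinner x y"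
    and cinner_commute: "cinner x y = cnj (cinner y x)"
    and cinner_real_part: "inner x y = Re (cinner x y)"

class chilbert_space = complex_inner + complete_space

definition clinear :: "('a::complex_inner \<Rightarrow> 'b::complex_inner) \<Rightarrow> bool" where
  "clinear T \<longleftrightarrow> (\<forall>x y. T (x + y) = T x + T y) \<and> (\<forall>c x. T (c *\<^sub>C x) = c *\<^sub>C T x)"

definition isometry :: "('a::chilbert_space \<Rightarrow> 'a) \<Rightarrow> bool" where
  "isometry V \<longleftrightarrow> clinear V \<and> (\<forall>x. norm (V x) = norm x)"

text \<open>Hilbert space adjoint (exists and is unique for bounded operators).\<close>
definition adj :: "('a::chilbert_space \<Rightarrow> 'a) \<Rightarrow> ('a \<Rightarrow> 'a)" where
  "adj T = (THE S. \<forall>x y. cinner (T x) y = cinner x (S y))"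

definition doubly_noncommuting ::
    "nat \<Rightarrow> (nat \<Rightarrow> nat \<Rightarrow> complex) \<Rightarrow> (nat \<Rightarrow> 'a::chilbert_space \<Rightarrow> 'a) \<Rightarrow> bool" where
  "doubly_noncommuting n z V \<longleftrightarrow>
     (\<forall>i\<in>{1..n}. \<forall>j\<in>{1..n}. i \<noteq> j \<longrightarrow> cmod (z i j) = 1 \<and> z j i = cnj (z i j)) \<and>
     (\<forall>i\<in>{1..n}. isometry (V i)) \<and>
     (\<forall>i\<in>{1..n}. \<forall>j\<in>{1..n}. i \<noteq> j \<longrightarrow>
        adj (V i) \<circ> V j = (\<lambda>x. cnj (z i j) *\<^sub>C (V j \<circ> adj (V i)) x))"

end

theory Submission imports Defs begin

lemma scaleC_zero_right[simp]: "a *\<^sub>C 0 = 0"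
  using scaleC_add_right[of a 0 0] by simp
lemma scaleC_zero_left[simp]: "0 *\<^sub>C x = 0"
  using scaleC_add_left[of 0 0 x] by simp
lemma scaleC_minus_right: "a *\<^sub>C (- x) = - (a *\<^sub>C x)"
  using scaleC_add_right[of a x "-x"] by (simp add: eq_neg_iff_add_eq_0 add.commute)
lemma scaleC_diff_right: "a *\<^sub>C (x - y) = a *\<^sub>C x - a *\<^sub>C y"
proof -
  have "a *\<^sub>C (x - y) = a *\<^sub>C (x + - y)" by (simp only: diff_conv_add_uminus)
  also have "\<dots> = a *\<^sub>C x + - (a *\<^sub>C y)" by (simp only: scaleC_add_right scaleC_minus_right)
  finally show ?thesis by simp
qed
lemma cinner_zero_left[simp]: "cinner 0 y = 0"
  using cinner_add_left[of 0 0 y] by simp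
lemma cinner_minus_left: "cinner (- x) y = - cinner x y"
proof -
  have h0: "cinner x y + cinner (- x) y = 0" using cinner_add_left[of x "-x" y] by simp
  thus ?thesis by (simp add: add_eq_0_iff)
qed
lemma cinner_diff_left: "cinner (x - y) z = cinner x z - cinner y z"
proof -
  have "cinner (x - y) z = cinner (x + - y) z" by (simp only: diff_conv_add_uminus)
  also have "\<dots> = cinner x z + - cinner y z" by (simp only: cinner_add_left cinner_minus_left)
  finally show ?thesis by simp
qed
lemma cinner_add_right: "cinner x (y + z) = cinner x y + cinner x z"
proof -
  have "cinner x (y + z) = cnj (cinner (y + z) x)" by (rule cinner_commute)
  also have "\<dots> = cnj (cinner y x) + cnj (cinner z x)" by (simp add: cinner_add_left)
  finally show ?thesis by (simp only: cinner_commute[of x y] cinner_commute[of x z])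
qed
lemma cinner_diff_right: "cinner x (y - z) = cinner x y - cinner x z"
proof -
  have "cinner x (y - z) = cnj (cinner (y - z) x)" by (rule cinner_commute)
  also have "\<dots> = cnj (cinner y x) - cnj (cinner z x)" by (simp add: cinner_diff_left)
  finally show ?thesis by (simp only: cinner_commute[of x y] cinner_commute[of x z])
qed
lemma cinner_scaleC_right: "cinner x (a *\<^sub>C y) = cnj a * cinner x y"
proof -
  have "cinner x (a *\<^sub>C y) = cnj (cinner (a *\<^sub>C y) x)" by (rule cinner_commute)
  also have "\<dots> = cnj a * cnj (cinner y x)" by (simp add: cinner_scaleC_left)
  finally show ?thesis by (simp only: cinner_commute[of x y])
qed
lemma cinner_Im: "Im (cinner x y) = - inner (\<i> *\<^sub>C x) y"
  by (simp add: cinner_real_part cinner_scaleC_left)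
lemma cinner_parts: "cinner x y = Complex (inner x y) (- inner (\<i> *\<^sub>C x) y)"
  by (rule complex_eqI) (simp_all add: cinner_Im cinner_real_part)
lemma cinner_eqI: assumes "\<And>x. cinner x y1 = cinner x y2" shows "y1 = y2"
proof -
  have "cinner (y1 - y2) (y1 - y2) = 0" using assms[of "y1-y2"] by (simp add: cinner_diff_right)
  hence "inner (y1 - y2) (y1 - y2) = 0" by (simp add: cinner_real_part)
  thus ?thesis by simp
qed

lemma adj_unique:
  fixes T S :: "'a::chilbert_space \<Rightarrow> 'a"
  assumes "\<And>x y. cinner (T x) y = cinner x (S y)"
  shows "adj T = S"
  unfolding adj_def
proof (rule the_equality)
  show "\<forall>x y. cinner (T x) y = cinner x (S y)" using assms by blast
  fix S' assume h: "\<forall>x y. cinner (T x) y = cinner x (S' y)"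
  show "S' = S"
  proof
    fix y show "S' y = S y"
    proof (rule cinner_eqI)
      fix x
      have "cinner x (S' y) = cinner (T x) y" using h by simp
      also have "\<dots> = cinner x (S y)" by (rule assms)
      finally show "cinner x (S' y) = cinner x (S y)" .
    qed
  qed
qed


locale iso = fixes V :: "'a::chilbert_space \<Rightarrow> 'a" assumes iso: "isometry V"
begin
lemma add: "V (x + y) = V x + V y" and scC: "V (c *\<^sub>C x) = c *\<^sub>C V x" and nrm: "norm (V x) = norm x"
  using iso unfolding isometry_def clinear_def by auto
lemma zero[simp]: "V 0 = 0" using add[of 0 0] by simp
lemma minus: "V (- x) = - V x" using add[of x "-x"] by (simp add: eq_neg_iff_add_eq_0 add.commute)
lemma diff: "V (x - y) = V x - V y"
proof -
  have "V (x - y) = V (x + - y)" by (simp only: diff_conv_add_uminus)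
  also have "\<dots> = V x + - V y" by (simp only: add minus)
  finally show ?thesis by simp
qed
lemma scR: "V (scaleR r x) = scaleR r (V x)" by (simp add: scaleR_scaleC scC)
lemma inn: "inner (V x) (V y) = inner x y"
proof -
  have "norm (V (x + y))^2 = norm (x+y)^2" by (simp add: nrm)
  hence "inner (V x + V y) (V x + V y) = inner (x+y) (x+y)" by (simp add: add power2_norm_eq_inner)
  moreover have "inner (V x) (V x) = inner x x" "inner (V y) (V y) = inner y y"
    by (metis nrm power2_norm_eq_inner)+
  ultimately show ?thesis by (simp add: inner_add_left inner_add_right inner_commute)
qed
lemma cinn: "cinner (V x) (V y) = cinner x y"
  by (metis cinner_parts inn scC)
lemma ndiff: "norm (V x - V y) = norm (x - y)" by (metis diff nrm)

lemma sq_expand: "norm (w - t *\<^sub>R U)^2 = norm w^2 - 2 * t * inner w U + t^2 * norm U^2"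
  for w U :: "'b::real_inner"
  by (simp only: power2_norm_eq_inner)
     (simp add: inner_diff_left inner_diff_right inner_commute[of U w] power2_eq_square algebra_simps)

lemma proj: "\<exists>x0. \<forall>u. inner (a - V x0) (V u) = 0"
proof -
  define D where "D = (INF x. norm (a - V x)^2)"
  have bdd: "bdd_below (range (\<lambda>x. norm (a - V x)^2))" by (rule bdd_belowI[of _ 0]) auto
  have D_le: "D \<le> norm (a - V x)^2" for x unfolding D_def by (rule cINF_lower[OF bdd]) auto
  have "\<exists>x. norm (a - V x)^2 < D + 1 / real (Suc n)" for n
  proof -
    have "D < D + 1 / real (Suc n)" by simp
    then show ?thesis unfolding D_def using cINF_less_iff[OF _ bdd, of "D + 1 / real (Suc n)"] unfolding D_def by blast
  qed
  then obtain X where X: "\<And>n. norm (a - V (X n))^2 < D + 1 / real (Suc n)" by metis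
  have par: "norm (V (X p) - V (X q))^2 \<le> 2 / real (Suc p) + 2 / real (Suc q)" for p q
  proof -
    let ?u = "a - V (X p)" and ?v = "a - V (X q)"
    have pl: "norm (?u - ?v)^2 + norm (?u + ?v)^2 = 2 * norm ?u^2 + 2 * norm ?v^2"
      by (simp add: power2_norm_eq_inner inner_add_left inner_add_right inner_diff_left inner_diff_right inner_commute)
    have "?u + ?v = 2 *\<^sub>R (a - V (scaleR (1/2) (X p + X q)))"
      by (simp add: scR add algebra_simps scaleR_2)
    hence "norm (?u + ?v)^2 = 4 * norm (a - V (scaleR (1/2) (X p + X q)))^2"
      by (simp add: power_mult_distrib)
    hence "norm (?u + ?v)^2 \<ge> 4 * D" using D_le by simp
    moreover have "norm (?u - ?v)^2 = norm (V (X p) - V (X q))^2" by (simp add: norm_minus_commute)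
    ultimately show ?thesis using X[of p] X[of q] pl by linarith
  qed
  have C: "Cauchy X"
  proof (rule CauchyI)
    fix e :: real assume e: "0 < e"
    obtain N :: nat where N: "4 / e^2 < real N" using reals_Archimedean2 by blast
    have "\<forall>p\<ge>N. \<forall>q\<ge>N. norm (X p - X q) < e"
    proof (intro allI impI)
      fix p q assume pq: "N \<le> p" "N \<le> q"
      have e2: "0 < e^2" using e by simp
      have "2 / real (Suc p) < e^2 / 2"
      proof -
        have "4 / e^2 < real (Suc p)" using N pq by linarith
        hence "4 < real (Suc p) * e^2" using e2 by (simp add: field_simps)
        thus ?thesis by (simp add: field_simps)
      qed
      moreover have "2 / real (Suc q) < e^2 / 2"
      proof -
        have "4 / e^2 < real (Suc q)" using N pq by linarith
        hence "4 < real (Suc q) * e^2" using e2 by (simp add: field_simps)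
        thus ?thesis by (simp add: field_simps)
      qed
      ultimately have "norm (X p - X q)^2 < e^2" using par[of p q] by (simp add: ndiff)
      thus "norm (X p - X q) < e" using e by (smt (verit) power_mono norm_ge_zero)
    qed
    thus "\<exists>M. \<forall>m\<ge>M. \<forall>n\<ge>M. norm (X m - X n) < e" by blast
  qed
  then obtain x0 where lim: "X \<longlonglongrightarrow> x0" using Cauchy_convergent_iff convergent_def by blast
  have limV: "(\<lambda>n. V (X n)) \<longlonglongrightarrow> V x0"
  proof -
    have "(\<lambda>n. X n - x0) \<longlonglongrightarrow> 0" using lim by (simp add: LIM_zero)
    hence "(\<lambda>n. norm (X n - x0)) \<longlonglongrightarrow> 0" by (simp add: tendsto_norm_zero)
    hence "(\<lambda>n. norm (V (X n) - V x0)) \<longlonglongrightarrow> 0" by (simp add: ndiff)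
    hence "(\<lambda>n. V (X n) - V x0) \<longlonglongrightarrow> 0" by (simp add: tendsto_norm_zero_iff)
    thus ?thesis by (simp add: LIM_zero_iff)
  qed
  have l1: "(\<lambda>n. norm (a - V (X n))^2) \<longlonglongrightarrow> norm (a - V x0)^2"
    by (intro tendsto_intros limV)
  have l2: "(\<lambda>n. D + 1 / real (Suc n)) \<longlonglongrightarrow> D + 0"
    by (intro tendsto_intros LIMSEQ_inverse_real_of_nat[unfolded inverse_eq_divide])
  have min: "norm (a - V x0)^2 \<le> D"
    using LIMSEQ_le[OF l1 l2] X by (simp add: less_imp_le)
  show ?thesis
  proof (intro exI allI)
    fix u
    let ?w = "a - V x0" and ?c = "inner (a - V x0) (V u)" and ?N = "norm (V u)^2"
    have key: "2 * t * ?c \<le> t^2 * ?N" for t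
    proof -
      have "norm ?w ^2 \<le> norm (a - V (x0 + scaleR t u))^2" using min D_le by (meson order_trans)
      also have "a - V (x0 + scaleR t u) = ?w - scaleR t (V u)" by (simp add: add scR)
      also have "norm (?w - scaleR t (V u))^2 = norm ?w^2 - 2 * t * ?c + t^2 * ?N"
        by (rule sq_expand)
      finally show ?thesis by simp
    qed
    show "?c = 0"
    proof (rule ccontr)
      assume c: "?c \<noteq> 0"
      have N0: "0 \<le> ?N" by simp
      define s where "s = ?N + 1"
      have s0: "0 < s" using N0 unfolding s_def by linarith
      define C where "C = ?c^2"
      have C0: "0 < C" using c unfolding C_def by simp
      have k: "2 * (?c / s) * ?c \<le> (?c / s)^2 * ?N" by (rule key)
      have e1: "2 * (?c / s) * ?c * s^2 = 2 * C * s" using s0 unfolding C_def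
        by (simp add: power2_eq_square field_simps)
      have e2: "(?c / s)^2 * ?N * s^2 = C * ?N" using s0 unfolding C_def
        by (simp add: power2_eq_square field_simps)
      have "2 * (?c / s) * ?c * s^2 \<le> (?c / s)^2 * ?N * s^2"
        using mult_right_mono[OF k, of "s^2"] by simp
      hence h: "2 * C * s \<le> C * ?N" using e1 e2 by simp
      have "2 * C * s = 2 * (C * ?N) + 2 * C" unfolding s_def by (simp add: algebra_simps)
      moreover have "0 \<le> C * ?N" using C0 N0 by simp
      ultimately show False using h C0 by linarith
    qed
  qed
qed

lemma adj_ex: "\<exists>S. \<forall>x y. cinner (V x) y = cinner x (S y)"
proof -
  from proj have "\<forall>a. \<exists>x0. \<forall>u. inner (a - V x0) (V u) = 0" by blast
  then obtain S where S: "\<And>a u. inner (a - V (S a)) (V u) = 0" by metis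
  have "cinner (V x) y = cinner x (S y)" for x y
  proof -
    have "cinner (V x) (y - V (S y)) = 0"
      using S[of y x] S[of y "\<i> *\<^sub>C x"]
      by (simp add: cinner_parts scC inner_commute complex_eq_iff)
    hence "cinner (V x) y = cinner (V x) (V (S y))" by (simp add: cinner_diff_right)
    thus ?thesis by (simp add: cinn)
  qed
  thus ?thesis by blast
qed

lemma adj: "cinner (V x) y = cinner x (adj V y)"
proof -
  obtain S where S: "\<And>x y. cinner (V x) y = cinner x (S y)" using adj_ex by blast
  have "adj V = S" by (rule adj_unique) (rule S)
  thus ?thesis using S by simp
qed

lemma adjV: "adj V (V x) = x"
  by (rule sym, rule cinner_eqI) (metis adj cinn)

lemma adj_add: "adj V (x + y) = adj V x + adj V y"
  by (rule cinner_eqI) (metis adj cinner_add_right)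
lemma adj_diff: "adj V (x - y) = adj V x - adj V y"
  by (rule cinner_eqI) (simp add: adj[symmetric] cinner_diff_right)
lemma adj_scC: "adj V (c *\<^sub>C x) = c *\<^sub>C adj V x"
  by (rule cinner_eqI) (metis adj cinner_scaleC_right)
end


lemma funpow_scC:
  fixes G :: "'a::complex_inner \<Rightarrow> 'a"
  assumes "\<And>c y. G (c *\<^sub>C y) = c *\<^sub>C G y"
  shows "(G ^^ k) (c *\<^sub>C y) = c *\<^sub>C (G ^^ k) y"
  by (induction k) (simp_all add: assms)

lemma funpow_diff:
  fixes G :: "'a::complex_inner \<Rightarrow> 'a"
  assumes "\<And>x y. G (x - y) = G x - G y"
  shows "(G ^^ k) (x - y) = (G ^^ k) x - (G ^^ k) y"
  by (induction k) (simp_all add: assms)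

lemma funpow_comm:
  fixes F G :: "'a::complex_inner \<Rightarrow> 'a"
  assumes FG: "\<And>x. F (G x) = c *\<^sub>C G (F x)"
    and G: "\<And>c y. G (c *\<^sub>C y) = c *\<^sub>C G y"
  shows "F ((G ^^ k) x) = c ^ k *\<^sub>C (G ^^ k) (F x)"
proof (induction k)
  case 0 then show ?case by (simp add: scaleC_one)
next
  case (Suc k)
  have "F ((G ^^ Suc k) x) = c *\<^sub>C G (F ((G ^^ k) x))" by (simp add: FG)
  also have "\<dots> = c ^ Suc k *\<^sub>C (G ^^ Suc k) (F x)" by (simp add: Suc G scaleC_scaleC)
  finally show ?case .
qed

lemma swap_rel:
  fixes F G :: "'a::complex_inner \<Rightarrow> 'a"
  assumes "\<And>x. F (G x) = c *\<^sub>C G (F x)" and "c * d = 1"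
  shows "G (F x) = d *\<^sub>C F (G x)"
proof -
  have "d *\<^sub>C F (G x) = (d * c) *\<^sub>C G (F x)" by (simp add: assms scaleC_scaleC)
  thus ?thesis using assms(2) by (simp add: mult.commute scaleC_one)
qed

lemma main_rel:
  fixes Vi Vj :: "'a::chilbert_space \<Rightarrow> 'a"
  assumes iVi: "isometry Vi" and iVj: "isometry Vj" and w1: "w * cnj w = 1"
    and R1: "\<And>x. adj Vi (Vj x) = cnj w *\<^sub>C Vj (adj Vi x)"
  shows "Vi (Vj x) = w *\<^sub>C Vj (Vi x)"
proof -
  interpret I: iso Vi by (rule iso.intro, rule iVi)
  interpret J: iso Vj by (rule iso.intro, rule iVj)
  let ?X = "Vj (Vi x)" and ?Y = "Vi (Vj x)" and ?c = "cinner x x"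
  have XX: "cinner ?X ?X = ?c" by (simp add: I.cinn J.cinn)
  have YY: "cinner ?Y ?Y = ?c" by (simp add: I.cinn J.cinn)
  have "cinner ?Y ?X = cinner (Vj x) (adj Vi ?X)" by (rule I.adj)
  also have "\<dots> = cinner (Vj x) (cnj w *\<^sub>C Vj x)" by (simp add: R1 I.adjV)
  also have "\<dots> = w * ?c" by (simp add: cinner_scaleC_right J.cinn)
  finally have YX: "cinner ?Y ?X = w * ?c" .
  have XY: "cinner ?X ?Y = cnj w * ?c"
    by (metis YX cinner_commute complex_cnj_mult)
  have "cinner (?Y - w *\<^sub>C ?X) (?Y - w *\<^sub>C ?X) =
        cinner ?Y ?Y - w * cinner ?X ?Y - cnj w * (cinner ?Y ?X - w * cinner ?X ?X)"
    by (simp only: cinner_diff_left cinner_diff_right cinner_scaleC_left cinner_scaleC_right)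
  also have "\<dots> = ?c - (w * cnj w) * ?c"
    unfolding XX YY XY YX by (simp add: algebra_simps)
  also have "\<dots> = 0" using w1 by simp
  finally have "inner (?Y - w *\<^sub>C ?X) (?Y - w *\<^sub>C ?X) = 0" by (simp add: cinner_real_part)
  thus ?thesis by simp
qed


theorem corollary3p2:
  fixes n :: nat and z :: "nat \<Rightarrow> nat \<Rightarrow> complex"
    and V :: "nat \<Rightarrow> 'h::chilbert_space \<Rightarrow> 'h" and k :: nat
  assumes "n \<ge> 1"
    and "doubly_noncommuting n z V"
    and "i \<in> {1..n}" and "j \<in> {1..n}" and "i \<noteq> j"
  shows "(V i \<circ> ((V j ^^ k) \<circ> (adj (V j) ^^ k)) = ((V j ^^ k) \<circ> (adj (V j) ^^ k)) \<circ> V i) \<and>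
         (adj (V i) \<circ> ((V j ^^ k) \<circ> (adj (V j) ^^ k))
           = ((V j ^^ k) \<circ> (adj (V j) ^^ k)) \<circ> adj (V i)) \<and>
         (V i \<circ> ((V j ^^ k) \<circ> (\<lambda>x. x - V j (adj (V j) x)) \<circ> (adj (V j) ^^ k))
           = ((V j ^^ k) \<circ> (\<lambda>x. x - V j (adj (V j) x)) \<circ> (adj (V j) ^^ k)) \<circ> V i) \<and>
         (adj (V i) \<circ> ((V j ^^ k) \<circ> (\<lambda>x. x - V j (adj (V j) x)) \<circ> (adj (V j) ^^ k))
           = ((V j ^^ k) \<circ> (\<lambda>x. x - V j (adj (V j) x)) \<circ> (adj (V j) ^^ k)) \<circ> adj (V i))"
proof -
  note D = assms(2)[unfolded doubly_noncommuting_def]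
  define w where "w = z i j"
  have Diso: "\<forall>i\<in>{1..n}. isometry (V i)" using D by (rule conjunct1[OF conjunct2])
  have Dz: "\<forall>i\<in>{1..n}. \<forall>j\<in>{1..n}. i \<noteq> j \<longrightarrow> cmod (z i j) = 1 \<and> z j i = cnj (z i j)"
    using D by (rule conjunct1)
  have iVi: "isometry (V i)" using Diso assms(3) by (rule bspec)
  have iVj: "isometry (V j)" using Diso assms(4) by (rule bspec)
  have wz: "cmod (z i j) = 1 \<and> z j i = cnj (z i j)" using Dz assms(3,4,5) by blast
  have w1: "cmod w = 1" and zji: "z j i = cnj w" using wz unfolding w_def by (rule conjunct1, rule conjunct2)
  have ww: "w * cnj w = 1" using w1 complex_norm_square[of w] by simp
  have ww': "cnj w * w = 1" using ww by (simp add: mult.commute)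
  interpret I: iso "V i" by (rule iso.intro, rule iVi)
  interpret J: iso "V j" by (rule iso.intro, rule iVj)
  let ?Vi = "V i" and ?Vj = "V j" and ?Ai = "adj (V i)" and ?Aj = "adj (V j)"
  have R1: "\<And>x. ?Ai (?Vj x) = cnj w *\<^sub>C ?Vj (?Ai x)"
    using fun_cong[OF D[THEN conjunct2, THEN conjunct2, rule_format, OF assms(3,4,5)]]
    unfolding w_def by simp
  have R2: "\<And>x. ?Aj (?Vi x) = w *\<^sub>C ?Vi (?Aj x)"
    using fun_cong[OF D[THEN conjunct2, THEN conjunct2, rule_format, OF assms(4,3)]] assms(5) zji
    by auto
  have R3: "\<And>x. ?Vi (?Vj x) = w *\<^sub>C ?Vj (?Vi x)"
    by (rule main_rel[OF iVi iVj ww R1])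
  have R3': "\<And>x. ?Aj (?Ai x) = cnj w *\<^sub>C ?Ai (?Aj x)"
  proof -
    fix x
    show "?Aj (?Ai x) = cnj w *\<^sub>C ?Ai (?Aj x)"
    proof (rule cinner_eqI)
      fix u
      have "cinner u (?Aj (?Ai x)) = cinner (?Vi (?Vj u)) x" by (simp add: I.adj J.adj)
      also have "\<dots> = w * cinner u (?Ai (?Aj x))" by (simp add: R3 cinner_scaleC_left I.adj J.adj)
      also have "\<dots> = cinner u (cnj w *\<^sub>C ?Ai (?Aj x))" by (simp add: cinner_scaleC_right)
      finally show "cinner u (?Aj (?Ai x)) = cinner u (cnj w *\<^sub>C ?Ai (?Aj x))" .
    qed
  qed
  have R4: "\<And>x. ?Ai (?Aj x) = w *\<^sub>C ?Aj (?Ai x)" by (rule swap_rel[where F="?Aj" and G="?Ai", OF R3' ww'])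
  have R2': "\<And>x. ?Vi (?Aj x) = cnj w *\<^sub>C ?Aj (?Vi x)" by (rule swap_rel[where F="?Aj" and G="?Vi", OF R2 ww])
  have P1: "?Vi ((?Vj ^^ m) ((?Aj ^^ m) x)) = (?Vj ^^ m) ((?Aj ^^ m) (?Vi x))" for m x
  proof -
    have "?Vi ((?Vj ^^ m) ((?Aj ^^ m) x)) = w ^ m *\<^sub>C (?Vj ^^ m) (?Vi ((?Aj ^^ m) x))"
      by (rule funpow_comm[where F="?Vi" and G="?Vj", OF R3 J.scC])
    also have "?Vi ((?Aj ^^ m) x) = cnj w ^ m *\<^sub>C (?Aj ^^ m) (?Vi x)"
      by (rule funpow_comm[where F="?Vi" and G="?Aj", OF R2' J.adj_scC])
    finally show ?thesis
      by (simp add: funpow_scC[OF J.scC] scaleC_scaleC power_mult_distrib[symmetric] ww scaleC_one)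
  qed
  have P2: "?Ai ((?Vj ^^ m) ((?Aj ^^ m) x)) = (?Vj ^^ m) ((?Aj ^^ m) (?Ai x))" for m x
  proof -
    have "?Ai ((?Vj ^^ m) ((?Aj ^^ m) x)) = cnj w ^ m *\<^sub>C (?Vj ^^ m) (?Ai ((?Aj ^^ m) x))"
      by (rule funpow_comm[where F="?Ai" and G="?Vj", OF R1 J.scC])
    also have "?Ai ((?Aj ^^ m) x) = w ^ m *\<^sub>C (?Aj ^^ m) (?Ai x)"
      by (rule funpow_comm[where F="?Ai" and G="?Aj", OF R4 J.adj_scC])
    finally show ?thesis
      by (simp add: funpow_scC[OF J.scC] scaleC_scaleC power_mult_distrib[symmetric] ww' scaleC_one)
  qed
  have Q: "(?Vj ^^ k) ((?Aj ^^ k) x - ?Vj (?Aj ((?Aj ^^ k) x)))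
     = (?Vj ^^ k) ((?Aj ^^ k) x) - (?Vj ^^ Suc k) ((?Aj ^^ Suc k) x)" for x
    by (simp add: funpow_diff[OF J.diff] funpow_swap1)
  show ?thesis
    by (intro conjI ext) (simp_all add: P1 P2 Q I.diff I.adj_diff del: funpow.simps)
qed

end
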